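(* Let $\alpha\in\mathbb T$ and $\varepsilon>0$. The set $S=\{n\in\mathbb N:\|n\alpha\|>\varepsilon\}$ is not $2$-large.
   Context: $\|t\|$ is the distance from $t$ to the nearest integer. For $r\ge2$, a set $R\subset\mathbb N$ is $r$-large if for every coloring of $\mathbb N$ with $r$ colors and every length $L$ there is a monochromatic arithmetic progression $a,a+n,\dots,a+(L-1)n$ with $n\in R$. *)

theory Defs
  imports Complex_Main
begin

definition dist_nint :: "real \<Rightarrow> real" where
  "dist_nint t = min (frac t) (1 - frac t)"

text \<open>Natural numbers are the positive integers {1,2,...}.\<close>
definition r_large :: "nat \<Rightarrow> nat set \<Rightarrow> bool" where
  "r_large r R \<longleftrightarrow>
     (\<forall>c :: nat \<Rightarrow> nat. (\<forall>x\<ge>1. c x < r) \<longrightarrow>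
        (\<forall>L::nat. \<exists>a\<ge>1. \<exists>n\<in>R. n \<ge> 1 \<and> (\<forall>i<L. c (a + i * n) = c a)))"

end

theory Submission
  imports Defs
begin

lemma dist_nint_le: "dist_nint \<theta> \<le> \<bar>\<theta> - of_int k\<bar>"
proof -
  have f: "frac \<theta> = \<theta> - of_int \<lfloor>\<theta>\<rfloor>" by (simp add: frac_def)
  have "\<lfloor>\<theta>\<rfloor> \<le> \<theta>" "\<theta> < of_int \<lfloor>\<theta>\<rfloor> + 1" by linarith+
  show ?thesis
  proof (cases "k \<le> \<lfloor>\<theta>\<rfloor>")
    case True
    then have "of_int k \<le> (of_int \<lfloor>\<theta>\<rfloor>::real)" by simp
    then show ?thesis unfolding dist_nint_def f using \<open>\<lfloor>\<theta>\<rfloor> \<le> \<theta>\<close> by linarith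
  next
    case False
    then have "of_int k \<ge> (of_int \<lfloor>\<theta>\<rfloor>::real) + 1" by simp
    then show ?thesis unfolding dist_nint_def f using \<open>\<theta> < of_int \<lfloor>\<theta>\<rfloor> + 1\<close> by linarith
  qed
qed

lemma key:
  fixes t \<theta> s :: real and L :: nat
  assumes H: "\<And>i. i < L \<Longrightarrow> s \<le> frac (t + real i * \<theta>) \<and> frac (t + real i * \<theta>) < s + 1/2"
    and L: "L \<ge> 2"
  shows "real (L - 1) * dist_nint \<theta> < 1/2"
proof -
  define x where "x i = frac (t + real i * \<theta>)" for i :: nat
  define m where "m i = \<lfloor>t + real (Suc i) * \<theta>\<rfloor> - \<lfloor>t + real i * \<theta>\<rfloor>" for i :: nat
  have xs: "x (Suc i) - x i = \<theta> - of_int (m i)" for i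
    unfolding x_def m_def frac_def by (simp add: algebra_simps)
  have small: "\<bar>\<theta> - of_int (m i)\<bar> < 1/2" if "Suc i < L" for i
  proof -
    have "s \<le> x (Suc i)" "x (Suc i) < s + 1/2" "s \<le> x i" "x i < s + 1/2"
      using H[of "Suc i"] H[of i] that unfolding x_def by auto
    then show ?thesis using xs[of i] by linarith
  qed
  have same: "m i = m 0" if "Suc i < L" for i
  proof -
    have a: "\<bar>\<theta> - of_int (m i)\<bar> < 1/2" using small that by blast
    have b: "\<bar>\<theta> - of_int (m 0)\<bar> < 1/2" using small L by simp
    have "\<bar>of_int (m i) - of_int (m 0)\<bar> < (1::real)" using a b by linarith
    then have "\<bar>m i - m 0\<bar> < 1" by linarith
    then show ?thesis by simp
  qed
  define d where "d = \<theta> - of_int (m 0)"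
  have lin: "i < L \<Longrightarrow> x i = x 0 + real i * d" for i
  proof (induction i)
    case 0 then show ?case by simp
  next
    case (Suc i)
    then have "x (Suc i) = x i + d" using xs[of i] same[of i] d_def by simp
    with Suc show ?case by (simp add: algebra_simps)
  qed
  have "x (L - 1) = x 0 + real (L - 1) * d" by (rule lin) (use L in simp)
  moreover have "s \<le> x (L - 1)" "x (L - 1) < s + 1/2" "s \<le> x 0" "x 0 < s + 1/2"
    using H[of "L - 1"] H[of 0] L unfolding x_def by auto
  ultimately have "\<bar>real (L - 1) * d\<bar> < 1/2" by linarith
  moreover have "dist_nint \<theta> \<le> \<bar>d\<bar>" unfolding d_def by (rule dist_nint_le)
  then have "real (L - 1) * dist_nint \<theta> \<le> real (L - 1) * \<bar>d\<bar>"
    by (intro mult_left_mono) auto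
  moreover have "real (L - 1) * \<bar>d\<bar> = \<bar>real (L - 1) * d\<bar>"
    by (simp add: abs_mult)
  ultimately show ?thesis by linarith
qed

theorem mainTheorem17:
  fixes \<alpha> \<epsilon> :: real
  assumes "\<epsilon> > 0"
  shows "\<not> r_large 2 {n::nat. n \<ge> 1 \<and> dist_nint (real n * \<alpha>) > \<epsilon>}"
proof
  assume R: "r_large 2 {n::nat. n \<ge> 1 \<and> dist_nint (real n * \<alpha>) > \<epsilon>}"
  define c where "c x = (if frac (real x * \<alpha>) < 1/2 then 0 else (1::nat))" for x :: nat
  have "\<forall>x\<ge>1. c x < 2" unfolding c_def by simp
  define L where "L = nat \<lceil>1/\<epsilon>\<rceil> + 2"
  obtain a n where n: "n \<ge> 1" "dist_nint (real n * \<alpha>) > \<epsilon>"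
    and mono: "\<forall>i<L. c (a + i * n) = c a"
    using R \<open>\<forall>x\<ge>1. c x < 2\<close> unfolding r_large_def by blast
  define s :: real where "s = (if c a = 0 then 0 else 1/2)"
  have eq: "real (a + i * n) * \<alpha> = real a * \<alpha> + real i * (real n * \<alpha>)" for i
    by (simp add: algebra_simps)
  have H: "s \<le> frac (real a * \<alpha> + real i * (real n * \<alpha>)) \<and>
      frac (real a * \<alpha> + real i * (real n * \<alpha>)) < s + 1/2" if "i < L" for i
  proof -
    have "c (a + i * n) = c a" using mono that by blast
    moreover have "0 \<le> frac y" "frac y < 1" for y :: real by (auto simp: frac_lt_1)
    ultimately show ?thesis unfolding s_def using eq[of i]
      by (auto simp: c_def split: if_splits)
  qed
  have "L \<ge> 2" unfolding L_def by simp
  from key[OF H this] have k: "real (L - 1) * dist_nint (real n * \<alpha>) < 1/2" .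
  have "real (L - 1) \<ge> 1/\<epsilon>" unfolding L_def by linarith
  then have "1/\<epsilon> * \<epsilon> \<le> real (L - 1) * \<epsilon>" using assms by (intro mult_right_mono) auto
  moreover have "1/\<epsilon> * \<epsilon> = 1" using assms by simp
  ultimately have "real (L - 1) * \<epsilon> \<ge> 1" by linarith
  moreover have "real (L - 1) * \<epsilon> \<le> real (L - 1) * dist_nint (real n * \<alpha>)"
    using n(2) by (intro mult_left_mono) auto
  ultimately show False using k by linarith
qed

end
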